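(* Let $\gamma_1,\dots,\gamma_r>0$ with $\gamma_{\min}=\min_i\gamma_i\ge\sqrt2$. Let $P$ be the solution of $A_\gamma^\top P+PA_\gamma=-I$ and $\Gamma=-A_\gamma^{-1}B=[(\gamma_1\cdots\gamma_r)^{-1},(\gamma_2\cdots\gamma_r)^{-1},\dots,\gamma_r^{-1}]^\top$. Then $\|P\Gamma\|\le\frac{C'}{\gamma_{\min}^2}$ for some constant $C'$ that does not depend on the $\gamma_i$'s.
   Context: $A_\gamma$ is the $r\times r$ matrix with diagonal entries $-\gamma_1,\dots,-\gamma_r$, entries $1$ on the superdiagonal and zeros elsewhere; $B=[0,\dots,0,1]^\top$. The indices are ordered so that $\gamma_r=\gamma_{\min}$. Norms are 2-norms. *)

theory Defs
  imports "Jordan_Normal_Form.Matrix"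
begin

text \<open>Indices are 0-based: the paper's gamma_1..gamma_r are gamma 0 .. gamma (r-1).\<close>

definition A_gamma :: "nat \<Rightarrow> (nat \<Rightarrow> real) \<Rightarrow> real mat" where
  "A_gamma r \<gamma> = mat r r (\<lambda>(i,j). if i = j then - \<gamma> i else if j = i + 1 then 1 else 0)"

definition B_vec :: "nat \<Rightarrow> real vec" where
  "B_vec r = vec r (\<lambda>i. if i = r - 1 then 1 else 0)"

text \<open>Gamma = -A^{-1} B, given explicitly: entry i is 1 / (gamma_i * ... * gamma_{r-1}).\<close>
definition Gamma_vec :: "nat \<Rightarrow> (nat \<Rightarrow> real) \<Rightarrow> real vec" where
  "Gamma_vec r \<gamma> = vec r (\<lambda>i. 1 / (\<Prod>j\<in>{i..<r}. \<gamma> j))"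

definition vnorm2 :: "real vec \<Rightarrow> real" where
  "vnorm2 v = sqrt (\<Sum>i<dim_vec v. (v $ i)^2)"

end

theory Submission imports Defs begin

lemma sumA:
  fixes f c :: "nat \<Rightarrow> real"
  assumes "i < r"
  shows "(\<Sum>k\<in>{0..<r}. (if k = i then c k else if i = k+1 then 1 else 0) * f k)
     = c i * f i + (if 0 < i then f (i-1) else 0)"
proof -
  have "(\<Sum>k\<in>{0..<r}. (if k = i then c k else if i = k+1 then 1 else 0) * f k)
     = (\<Sum>k\<in>{0..<r}. (if k = i then c k * f k else 0) + (if k = i - 1 \<and> 0 < i then f k else 0))"
    by (rule sum.cong) auto
  also have "\<dots> = c i * f i + (if 0 < i then f (i-1) else 0)"
    using assms by (simp add: sum.distrib sum.delta)
  finally show ?thesis .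
qed

lemma entry:
  fixes P :: "real mat"
  assumes P: "P \<in> carrier_mat r r"
    and E: "transpose_mat (A_gamma r \<gamma>) * P + P * A_gamma r \<gamma> = - (1\<^sub>m r)"
    and ij: "i < r" "j < r"
  shows "(\<gamma> i + \<gamma> j) * P $$ (i,j) = (if i = j then 1 else 0)
      + (if 0 < i then P $$ (i-1,j) else 0) + (if 0 < j then P $$ (i,j-1) else 0)"
proof -
  let ?A = "A_gamma r \<gamma>"
  have Ac: "?A \<in> carrier_mat r r" unfolding A_gamma_def by simp
  have Aent: "\<And>k l. k < r \<Longrightarrow> l < r \<Longrightarrow> ?A $$ (k,l) = (if k = l then - \<gamma> k else if l = k + 1 then 1 else 0)"
    unfolding A_gamma_def by simp
  have "(- (1\<^sub>m r)) $$ (i,j) = - (if i = j then 1 else 0)" using ij by simp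
  moreover have "(transpose_mat ?A * P + P * ?A) $$ (i,j)
     = (transpose_mat ?A * P) $$ (i,j) + (P * ?A) $$ (i,j)"
    using ij Ac P by simp
  moreover have "(transpose_mat ?A * P) $$ (i,j) = (\<Sum>k\<in>{0..<r}. (if k = i then - \<gamma> k else if i = k+1 then 1 else 0) * P $$ (k,j))"
    using ij Ac P by (simp add: scalar_prod_def Aent)
  moreover have "(P * ?A) $$ (i,j) = (\<Sum>k\<in>{0..<r}. (if k = j then - \<gamma> k else if j = k+1 then 1 else 0) * P $$ (i,k))"
    using ij Ac P by (auto simp add: scalar_prod_def Aent mult.commute intro!: sum.cong)
  ultimately have "(\<Sum>k\<in>{0..<r}. (if k = i then - \<gamma> k else if i = k+1 then 1 else 0) * P $$ (k,j))
     + (\<Sum>k\<in>{0..<r}. (if k = j then - \<gamma> k else if j = k+1 then 1 else 0) * P $$ (i,k)) = - (if i = j then 1 else 0)"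
    using E by (metis (no_types, lifting))
  then have "- \<gamma> i * P $$ (i,j) + (if 0 < i then P $$ (i-1,j) else 0)
     + (- \<gamma> j * P $$ (i,j) + (if 0 < j then P $$ (i,j-1) else 0)) = - (if i = j then 1 else 0)"
    using sumA[OF ij(1), of "\<lambda>k. - \<gamma> k" "\<lambda>k. P $$ (k,j)"] sumA[OF ij(2), of "\<lambda>k. - \<gamma> k" "\<lambda>k. P $$ (i,k)"]
    by simp
  then show ?thesis by (simp add: algebra_simps)
qed

lemma bound:
  fixes p :: "nat \<Rightarrow> nat \<Rightarrow> real" and g :: real
  assumes g1: "1 \<le> g" and gl: "\<And>i. i < r \<Longrightarrow> g \<le> \<gamma> i"
    and rec: "\<And>i j. i < r \<Longrightarrow> j < r \<Longrightarrow> (\<gamma> i + \<gamma> j) * p i j = (if i = j then 1 else 0)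
      + (if 0 < i then p (i-1) j else 0) + (if 0 < j then p i (j-1) else 0)"
  shows "i + j = n \<Longrightarrow> i < r \<Longrightarrow> j < r \<Longrightarrow> \<bar>p i j\<bar> \<le> 3 ^ (i+j) / g"
proof (induction n arbitrary: i j rule: less_induct)
  case (less n)
  have n_def: "n = i + j" using less by simp
  define T1 where "T1 = (if 0 < i then p (i-1) j else 0)"
  define T2 where "T2 = (if 0 < j then p i (j-1) else 0)"
  have g0: "0 < g" using g1 by simp
  have t1: "\<bar>T1\<bar> \<le> 3 ^ n / (3 * g)"
  proof (cases "0 < i")
    case True
    then have "\<bar>p (i-1) j\<bar> \<le> 3 ^ (i - 1 + j) / g" using less(1)[of "i - 1 + j" "i - 1" j] less(2-) by auto
    moreover have "(3::real) ^ n = 3 * 3 ^ (i - 1 + j)" using True unfolding n_def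
      by (metis Suc_diff_1 add_Suc power_Suc)
    ultimately show ?thesis using True g0 unfolding T1_def by (simp add: field_simps)
  qed (use g0 T1_def in simp)
  have t2: "\<bar>T2\<bar> \<le> 3 ^ n / (3 * g)"
  proof (cases "0 < j")
    case True
    then have "\<bar>p i (j-1)\<bar> \<le> 3 ^ (i + (j - 1)) / g" using less(1)[of "i + (j - 1)" i "j - 1"] less(2-) by auto
    moreover have "(3::real) ^ n = 3 * 3 ^ (i + (j - 1))" using True unfolding n_def
      by (metis Suc_diff_1 add_Suc_right power_Suc)
    ultimately show ?thesis using True g0 unfolding T2_def by (simp add: field_simps)
  qed (use g0 T2_def in simp)
  have e: "(\<gamma> i + \<gamma> j) * p i j = (if i = j then 1 else 0) + T1 + T2"
    using rec less unfolding T1_def T2_def by simp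
  have gi: "g \<le> \<gamma> i" "g \<le> \<gamma> j" using gl less by auto
  have "2 * g * \<bar>p i j\<bar> \<le> (\<gamma> i + \<gamma> j) * \<bar>p i j\<bar>"
    using gi by (intro mult_right_mono) auto
  also have "\<dots> = \<bar>(\<gamma> i + \<gamma> j) * p i j\<bar>" using gi g0 by (simp add: abs_mult)
  also have "\<dots> \<le> 1 + \<bar>T1\<bar> + \<bar>T2\<bar>" unfolding e by (simp; arith)
  also have "\<dots> \<le> 1 + 2 * (3 ^ n / (3 * g))" using t1 t2 by simp
  also have "\<dots> \<le> 2 * 3 ^ n"
  proof -
    have "3 ^ n / (3 * g) \<le> (3::real) ^ n / 3" using g1 g0
      by (intro divide_left_mono) auto
    moreover have "(1::real) \<le> 3 ^ n" by simp
    moreover have "2 * (3 ^ n / (3 * g)) = 2 * (3 ^ n / (3 * g))" by simp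
    ultimately show ?thesis by linarith
  qed
  finally have "2 * g * \<bar>p i j\<bar> \<le> 2 * 3 ^ n" .
  then show ?case using g0 unfolding n_def by (simp add: field_simps)
qed

lemma gamma_bound:
  fixes \<gamma> :: "nat \<Rightarrow> real"
  assumes g1: "1 \<le> g" and gl: "\<And>i. i < r \<Longrightarrow> g \<le> \<gamma> i" and j: "j < r"
  shows "0 < Gamma_vec r \<gamma> $ j \<and> Gamma_vec r \<gamma> $ j \<le> 1 / g"
proof -
  have "(\<Prod>k\<in>{j..<r}. g) \<le> (\<Prod>k\<in>{j..<r}. \<gamma> k)"
    using g1 gl by (intro prod_mono) auto
  moreover have "(\<Prod>k\<in>{j..<r}. g) = g ^ (r - j)" by simp
  moreover have "g ^ 1 \<le> g ^ (r - j)" using g1 j by (intro power_increasing) auto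
  ultimately have "g \<le> (\<Prod>k\<in>{j..<r}. \<gamma> k)" by simp
  moreover have "Gamma_vec r \<gamma> $ j = 1 / (\<Prod>k\<in>{j..<r}. \<gamma> k)"
    unfolding Gamma_vec_def using j by simp
  ultimately show ?thesis using g1
    by (auto intro!: divide_left_mono mult_pos_pos)
qed

theorem lemma4:
  fixes r :: nat
  assumes "r > 0"
  shows "\<exists>C'::real. \<forall>(\<gamma>::nat \<Rightarrow> real) (P::real mat).
           (\<forall>i<r. \<gamma> i > 0) \<and>
           (\<forall>i<r. \<gamma> (r - 1) \<le> \<gamma> i) \<and>
           Min (\<gamma> ` {..<r}) \<ge> sqrt 2 \<and>
           P \<in> carrier_mat r r \<and>
           transpose_mat (A_gamma r \<gamma>) * P + P * A_gamma r \<gamma> = - (1\<^sub>m r)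
           \<longrightarrow> vnorm2 (P *\<^sub>v Gamma_vec r \<gamma>) \<le> C' / (Min (\<gamma> ` {..<r}))^2"
proof (intro exI allI impI)
  fix \<gamma> :: "nat \<Rightarrow> real" and P :: "real mat"
  assume H: "(\<forall>i<r. \<gamma> i > 0) \<and>
           (\<forall>i<r. \<gamma> (r - 1) \<le> \<gamma> i) \<and>
           Min (\<gamma> ` {..<r}) \<ge> sqrt 2 \<and>
           P \<in> carrier_mat r r \<and>
           transpose_mat (A_gamma r \<gamma>) * P + P * A_gamma r \<gamma> = - (1\<^sub>m r)"
  define g where "g = Min (\<gamma> ` {..<r})"
  define K where "K = (9::real) ^ r"
  have Pc: "P \<in> carrier_mat r r" using H by blast
  have E: "transpose_mat (A_gamma r \<gamma>) * P + P * A_gamma r \<gamma> = - (1\<^sub>m r)" using H by blast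
  have "sqrt 2 \<le> g" using H g_def by blast
  moreover have "(1::real) \<le> sqrt 2" by simp
  ultimately have g1: "1 \<le> g" by linarith
  have g0: "0 < g" using g1 by simp
  have gl: "\<And>i. i < r \<Longrightarrow> g \<le> \<gamma> i" unfolding g_def by (rule Min_le) auto
  have pb: "\<bar>P $$ (i,j)\<bar> \<le> K / g" if "i < r" "j < r" for i j
  proof -
    have "\<bar>P $$ (i,j)\<bar> \<le> 3 ^ (i+j) / g"
      using bound[of g r \<gamma> "\<lambda>i j. P $$ (i,j)", OF g1 gl entry[OF Pc E], of i j] that by auto
    also have "\<dots> \<le> 3 ^ (2*r) / g" using that g0
      by (intro divide_right_mono power_increasing) auto
    also have "\<dots> = K / g" unfolding K_def by (simp add: power_mult)
    finally show ?thesis .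
  qed
  have K0: "0 \<le> K" unfolding K_def by simp
  define v where "v = P *\<^sub>v Gamma_vec r \<gamma>"
  have dv: "dim_vec v = r" unfolding v_def using Pc by simp
  have vb: "\<bar>v $ i\<bar> \<le> r * K / g^2" if i: "i < r" for i
  proof -
    have "v $ i = (\<Sum>j\<in>{0..<r}. P $$ (i,j) * Gamma_vec r \<gamma> $ j)"
      unfolding v_def using Pc i by (simp add: scalar_prod_def Gamma_vec_def)
    then have "\<bar>v $ i\<bar> \<le> (\<Sum>j\<in>{0..<r}. \<bar>P $$ (i,j) * Gamma_vec r \<gamma> $ j\<bar>)"
      by (simp add: sum_abs)
    also have "\<dots> \<le> (\<Sum>j\<in>{0..<r}. K / g * (1 / g))"
    proof (rule sum_mono)
      fix j assume "j \<in> {0..<r}"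
      then have j: "j < r" by simp
      have "\<bar>P $$ (i,j) * Gamma_vec r \<gamma> $ j\<bar> = \<bar>P $$ (i,j)\<bar> * Gamma_vec r \<gamma> $ j"
        using gamma_bound[of g r \<gamma>, OF g1 gl j] by (simp add: abs_mult)
      also have "\<dots> \<le> K / g * (1 / g)"
        using gamma_bound[of g r \<gamma>, OF g1 gl j] pb[OF i j] K0 g0
        by (intro mult_mono) auto
      finally show "\<bar>P $$ (i,j) * Gamma_vec r \<gamma> $ j\<bar> \<le> K / g * (1 / g)" .
    qed
    also have "\<dots> = r * K / g^2" by (simp add: power2_eq_square)
    finally show ?thesis .
  qed
  define c where "c = r * K / g^2"
  have c0: "0 \<le> c" unfolding c_def using K0 by simp
  have "(\<Sum>i<r. (v $ i)^2) \<le> (\<Sum>i<r. c^2)"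
  proof (rule sum_mono)
    fix i assume "i \<in> {..<r}"
    then have "\<bar>v $ i\<bar> \<le> c" using vb c_def by simp
    then show "(v $ i)^2 \<le> c^2" using c0
      by (metis abs_ge_zero power2_abs power_mono)
  qed
  also have "\<dots> = r * c^2" by simp
  also have "\<dots> \<le> (r * c)^2"
  proof -
    have "real r \<le> real r ^ 2" using assms by (simp add: power2_eq_square)
    then show ?thesis using c0 by (simp add: power_mult_distrib mult_right_mono)
  qed
  finally have "sqrt (\<Sum>i<r. (v $ i)^2) \<le> sqrt ((r * c)^2)"
    by (rule real_sqrt_le_mono)
  then have "vnorm2 v \<le> r * c"
    unfolding vnorm2_def dv using c0 by simp
  then show "vnorm2 (P *\<^sub>v Gamma_vec r \<gamma>) \<le> (real r * real r * K) / (Min (\<gamma> ` {..<r}))^2"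
    unfolding v_def c_def g_def by simp
qed

end
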